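(* Let $n\ge1$, $k>\ell\ge1$ and $s\ge1$ be integers, $d=\gcd(s,n)$, and $C=\{0,s\}\subseteq\mathbb{Z}/n\mathbb{Z}$. Let $A\subseteq\mathbb{Z}/n\mathbb{Z}$ be $C$-$(k,\ell)$-sum-free and let $K=\mathrm{stab}(k *_C A)$. If $K$ does not contain the cyclic subgroup $\langle d\rangle$ of $\mathbb{Z}/n\mathbb{Z}$ generated by $d$, then $|A|\le\left\lfloor\frac{n}{k+\ell}\right\rfloor$.
   Context: For subsets $X,Y$ of an abelian group, $X+Y=\{x+y: x\in X, y\in Y\}$, and for an integer $j\ge 1$, $jX=X+\dots+X$ ($j$ copies); $0X=\{0\}$. For $A,C\subseteq \mathbb{Z}/n\mathbb{Z}$ and an integer $j\ge 1$, define $j *_C A = jA+(j-1)C$. A set $A\subseteq\mathbb{Z}/n\mathbb{Z}$ is $C$-$(k,\ell)$-sum-free if $(k *_C A)\cap(\ell *_C A)=\emptyset$. The stabilizer of $X\subseteq \mathbb{Z}/n\mathbb{Z}$ is $\mathrm{stab}(X)=\{g: g+X=X\}$. *)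

theory Defs
  imports Main
begin

text \<open>Z/nZ is modelled by the residues {0..<n} of type nat, with addition mod n.\<close>

definition zmod_sumset :: "nat \<Rightarrow> nat set \<Rightarrow> nat set \<Rightarrow> nat set" where
  "zmod_sumset n X Y = {(x + y) mod n | x y. x \<in> X \<and> y \<in> Y}"

fun zmod_iter_sum :: "nat \<Rightarrow> nat \<Rightarrow> nat set \<Rightarrow> nat set" where
  "zmod_iter_sum n 0 X = {0}"
| "zmod_iter_sum n (Suc 0) X = X"
| "zmod_iter_sum n (Suc (Suc j)) X = zmod_sumset n (zmod_iter_sum n (Suc j) X) X"

definition star_C :: "nat \<Rightarrow> nat set \<Rightarrow> nat \<Rightarrow> nat set \<Rightarrow> nat set" where
  "star_C n C j A = zmod_sumset n (zmod_iter_sum n j A) (zmod_iter_sum n (j - 1) C)"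

definition C_sum_free :: "nat \<Rightarrow> nat set \<Rightarrow> nat \<Rightarrow> nat \<Rightarrow> nat set \<Rightarrow> bool" where
  "C_sum_free n C k l A \<longleftrightarrow> star_C n C k A \<inter> star_C n C l A = {}"

definition zmod_stab :: "nat \<Rightarrow> nat set \<Rightarrow> nat set" where
  "zmod_stab n X = {g \<in> {0..<n}. (\<lambda>x. (g + x) mod n) ` X = X}"

definition zmod_cyclic :: "nat \<Rightarrow> nat \<Rightarrow> nat set" where
  "zmod_cyclic n d = {(i * d) mod n | i. True}"

end

theory Submission
  imports Defs
begin

definition tr :: "nat \<Rightarrow> nat \<Rightarrow> nat set \<Rightarrow> nat set" where
  "tr n g X = (\<lambda>x. (g + x) mod n) ` X"

abbreviation SS where "SS n X Y \<equiv> zmod_sumset n X Y"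

lemma ss_iff: "z \<in> SS n X Y \<longleftrightarrow> (\<exists>x\<in>X. \<exists>y\<in>Y. z = (x + y) mod n)"
  by (auto simp: zmod_sumset_def)

lemma ss_memI: "x \<in> X \<Longrightarrow> y \<in> Y \<Longrightarrow> (x + y) mod n \<in> SS n X Y"
  by (auto simp: zmod_sumset_def)

lemma ss_sub: "0 < n \<Longrightarrow> SS n X Y \<subseteq> {0..<n}"
  by (auto simp: zmod_sumset_def)

lemma ss_fin: "0 < n \<Longrightarrow> finite (SS n X Y)"
  by (rule finite_subset[OF ss_sub]) auto

lemma ss_comm: "SS n X Y = SS n Y X"
proof -
  have "SS n X Y \<subseteq> SS n Y X" for X Y
  proof
    fix w assume "w \<in> SS n X Y"
    then obtain x y where "x \<in> X" "y \<in> Y" "w = (x + y) mod n" by (auto simp: ss_iff)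
    then show "w \<in> SS n Y X" using ss_memI[of y Y x X n] by (simp add: add.commute)
  qed
  then show ?thesis by blast
qed

lemma ss_assoc: "SS n (SS n X Y) Z = SS n X (SS n Y Z)"
proof -
  have "((x + y) mod n + z) mod n = (x + (y + z) mod n) mod n" for x y z :: nat
    by (simp add: mod_add_left_eq mod_add_right_eq add.assoc)
  note e = this
  show ?thesis
  proof (rule set_eqI)
    fix w
    show "w \<in> SS n (SS n X Y) Z \<longleftrightarrow> w \<in> SS n X (SS n Y Z)"
    proof
      assume "w \<in> SS n (SS n X Y) Z"
      then obtain x y z where "x \<in> X" "y \<in> Y" "z \<in> Z" "w = ((x + y) mod n + z) mod n"
        by (auto simp: ss_iff)
      then show "w \<in> SS n X (SS n Y Z)" unfolding e by (auto intro!: ss_memI)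
    next
      assume "w \<in> SS n X (SS n Y Z)"
      then obtain x y z where "x \<in> X" "y \<in> Y" "z \<in> Z" "w = (x + (y + z) mod n) mod n"
        by (auto simp: ss_iff)
      then show "w \<in> SS n (SS n X Y) Z" unfolding e[symmetric] by (auto intro!: ss_memI)
    qed
  qed
qed

lemma ss_mono: "X \<subseteq> X' \<Longrightarrow> Y \<subseteq> Y' \<Longrightarrow> SS n X Y \<subseteq> SS n X' Y'"
  by (auto simp: zmod_sumset_def)

lemma ss_empty1[simp]: "SS n {} Y = {}" and ss_empty2[simp]: "SS n X {} = {}"
  by (auto simp: zmod_sumset_def)

lemma ss_ne: "X \<noteq> {} \<Longrightarrow> Y \<noteq> {} \<Longrightarrow> SS n X Y \<noteq> {}"
  by (auto simp: zmod_sumset_def)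

lemma ss_Un2: "SS n X (Y \<union> Z) = SS n X Y \<union> SS n X Z"
  by (auto simp: zmod_sumset_def)

lemma ss_Un1: "SS n (X \<union> Y) Z = SS n X Z \<union> SS n Y Z"
  by (auto simp: zmod_sumset_def)

lemma ss_single: "SS n X {g} = tr n g X"
  by (auto simp: zmod_sumset_def tr_def add.commute)

lemma ss_zero: "X \<subseteq> {0..<n} \<Longrightarrow> SS n X {0} = X"
  by (force simp: zmod_sumset_def)

lemma tr_sub: "0 < n \<Longrightarrow> tr n g X \<subseteq> {0..<n}"
  by (auto simp: tr_def)

lemma add_cancel_mod: assumes "0 < (n::nat)" shows "(g + x + (n - g mod n)) mod n = x mod n"
proof -
  have h1: "g mod n \<le> g" by (rule mod_less_eq_dividend)
  have h2: "g mod n \<le> n" using assms by (simp add: less_imp_le)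
  have "g + x + (n - g mod n) = x + (g - g mod n) + n" using h1 h2 by arith
  also have "g - g mod n = n * (g div n)" by (simp add: minus_mod_eq_mult_div)
  finally have e: "g + x + (n - g mod n) = x + (g div n + 1) * n" by (simp add: algebra_simps)
  show ?thesis unfolding e by (rule mod_mult_self1)
qed

lemma tr_inj: "inj_on (\<lambda>x. (g + x) mod n) {0..<(n::nat)}"
proof (rule inj_onI)
  fix x y assume xy: "x \<in> {0..<n}" "y \<in> {0..<n}" and e: "(g + x) mod n = (g + y) mod n"
  then have n: "0 < n" by auto
  from e have "((g + x) mod n + (n - g mod n)) mod n = ((g + y) mod n + (n - g mod n)) mod n" by simp
  then have "(g + x + (n - g mod n)) mod n = (g + y + (n - g mod n)) mod n" by (simp only: mod_add_left_eq)
  then have "x mod n = y mod n" by (simp only: add_cancel_mod[OF n])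
  with xy show "x = y" by simp
qed

lemma card_tr: "X \<subseteq> {0..<n} \<Longrightarrow> card (tr n g X) = card X"
  unfolding tr_def by (rule card_image) (rule inj_on_subset[OF tr_inj])

lemma tr_tr: "tr n a (tr n b X) = tr n (a + b) X"
  by (auto simp: tr_def image_image mod_add_right_eq add.assoc)

lemma tr_0: "X \<subseteq> {0..<n} \<Longrightarrow> tr n 0 X = X"
  by (force simp: tr_def)

lemma tr_back: assumes "g \<le> n" "X \<subseteq> {0..<n}" shows "tr n (n - g) (tr n g X) = X"
proof -
  have "(n - g + (g + x) mod n) mod n = x" if "x \<in> X" for x
  proof -
    have "(n - g + (g + x) mod n) mod n = (n - g + (g + x)) mod n" by (simp add: mod_add_right_eq)
    also have "n - g + (g + x) = x + n" using assms(1) by simp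
    finally show ?thesis using that assms(2) by auto
  qed
  then show ?thesis by (force simp: tr_def image_image)
qed

lemma tr_mod: "tr n (g mod n) X = tr n g X"
  by (simp add: tr_def mod_add_left_eq)

lemma tr_mono: "X \<subseteq> Y \<Longrightarrow> tr n g X \<subseteq> tr n g Y"
  by (auto simp: tr_def)

lemma tr_mem: "x \<in> X \<Longrightarrow> (g + x) mod n \<in> tr n g X"
  by (auto simp: tr_def)

lemma stab_def2: "zmod_stab n X = {g \<in> {0..<n}. tr n g X = X}"
  by (simp add: zmod_stab_def tr_def)

lemma stab_iff:
  assumes "X \<subseteq> {0..<n}"
  shows "g \<in> zmod_stab n X \<longleftrightarrow> g < n \<and> tr n g X \<subseteq> X"
proof -
  have fin: "finite X" using assms by (rule finite_subset) simp
  have "tr n g X = X" if "tr n g X \<subseteq> X"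
    using card_subset_eq[OF fin that] card_tr[OF assms] by simp
  then show ?thesis unfolding stab_def2 by auto
qed

lemma stab_sub: "zmod_stab n X \<subseteq> {0..<n}"
  by (auto simp: zmod_stab_def)

lemma stab_mem: "g \<in> zmod_stab n X \<Longrightarrow> x \<in> X \<Longrightarrow> (g + x) mod n \<in> X"
  unfolding stab_def2 by (metis (mono_tags, lifting) mem_Collect_eq tr_mem)

lemma stab_mem': "g \<in> zmod_stab n X \<Longrightarrow> x \<in> X \<Longrightarrow> (x + g) mod n \<in> X"
  using stab_mem by (simp add: add.commute)

lemma stab_0: "0 < n \<Longrightarrow> X \<subseteq> {0..<n} \<Longrightarrow> 0 \<in> zmod_stab n X"
  by (simp add: stab_def2 tr_0)

lemma stab_add:
  assumes "X \<subseteq> {0..<n}" "g \<in> zmod_stab n X" "h \<in> zmod_stab n X"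
  shows "(g + h) mod n \<in> zmod_stab n X"
  using assms unfolding stab_def2 by (auto simp: tr_mod tr_tr[symmetric])

lemma stab_neg:
  assumes "X \<subseteq> {0..<n}" "g \<in> zmod_stab n X"
  shows "(n - g) mod n \<in> zmod_stab n X"
proof -
  have "g < n" "tr n g X = X" using assms by (auto simp: stab_def2)
  then have "tr n (n - g) X = X" using tr_back[of g n X] assms(1) by simp
  moreover have "0 < n" using \<open>g < n\<close> by simp
  moreover have "tr n ((n - g) mod n) X = tr n (n - g) X" by (rule tr_mod)
  ultimately have "(n - g) mod n < n \<and> tr n ((n - g) mod n) X = X" by simp
  then show ?thesis unfolding stab_def2 by simp
qed

lemma modeq_int: "((a::nat) mod n = b mod n) \<longleftrightarrow> (int n dvd int a - int b)"
proof -
  have "(a mod n = b mod n) \<longleftrightarrow> (int a mod int n = int b mod int n)"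
    by (metis of_nat_eq_iff zmod_int)
  also have "\<dots> \<longleftrightarrow> int n dvd int a - int b" by (rule mod_eq_dvd_iff)
  finally show ?thesis .
qed

lemma mod_neg_cancel: "a \<le> (n::nat) \<Longrightarrow> (y + a + (n - a)) mod n = y mod n"
  by simp

lemma mod_neg_cancel2: assumes "a \<le> (n::nat)" shows "((y + a) mod n + (n - a) mod n) mod n = y mod n"
proof -
  have "((y + a) mod n + (n - a) mod n) mod n = (y + a + (n - a)) mod n"
    by (simp only: mod_add_left_eq mod_add_right_eq)
  also have "y + a + (n - a) = y + n" using assms by simp
  finally show ?thesis by simp
qed

lemma stab_le: "g \<in> zmod_stab n X \<Longrightarrow> g < n"
  by (auto simp: zmod_stab_def)

lemma stab_ss:
  assumes "0 < n" "X \<subseteq> {0..<n}"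
  shows "zmod_stab n X \<subseteq> zmod_stab n (SS n X Y)"
proof
  fix g assume g: "g \<in> zmod_stab n X"
  have "tr n g (SS n X Y) \<subseteq> SS n X Y"
  proof
    fix z assume "z \<in> tr n g (SS n X Y)"
    then obtain x y where xy: "x \<in> X" "y \<in> Y" "z = (g + (x + y) mod n) mod n"
      by (auto simp: tr_def ss_iff)
    then have "z = ((g + x) mod n + y) mod n" by (simp add: mod_add_left_eq mod_add_right_eq add.assoc)
    moreover have "(g + x) mod n \<in> X" using stab_mem[OF g xy(1)] .
    ultimately show "z \<in> SS n X Y" using xy(2) ss_memI by blast
  qed
  then show "g \<in> zmod_stab n (SS n X Y)"
    using stab_iff[OF ss_sub[OF assms(1)]] stab_le[OF g] by blast
qed

lemma stab_ss2:
  assumes "0 < n" "Y \<subseteq> {0..<n}"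
  shows "zmod_stab n Y \<subseteq> zmod_stab n (SS n X Y)"
  using stab_ss[OF assms, of X] by (simp add: ss_comm)

lemma ss_stab_self:
  assumes "0 < n" "X \<subseteq> {0..<n}"
  shows "SS n X (zmod_stab n X) = X"
proof
  show "SS n X (zmod_stab n X) \<subseteq> X" by (auto simp: ss_iff stab_mem')
  show "X \<subseteq> SS n X (zmod_stab n X)"
  proof
    fix x assume "x \<in> X"
    then have "x = (x + 0) mod n" using assms(2) by auto
    then show "x \<in> SS n X (zmod_stab n X)" using ss_memI[OF \<open>x \<in> X\<close> stab_0[OF assms]] by metis
  qed
qed

lemma stab_self:
  assumes "0 < n" "X \<subseteq> {0..<n}"
  shows "SS n (zmod_stab n X) (zmod_stab n X) = zmod_stab n X"
proof
  show "SS n (zmod_stab n X) (zmod_stab n X) \<subseteq> zmod_stab n X"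
    using stab_add[OF assms(2)] by (auto simp: ss_iff)
  show "zmod_stab n X \<subseteq> SS n (zmod_stab n X) (zmod_stab n X)"
  proof
    fix g assume g: "g \<in> zmod_stab n X"
    then have "g = (g + 0) mod n" using stab_le[OF g] by simp
    then show "g \<in> SS n (zmod_stab n X) (zmod_stab n X)" using ss_memI[OF g stab_0[OF assms]] by metis
  qed
qed

lemma ss_sub_stab:
  assumes "0 < n" "X \<subseteq> {0..<n}" "Y \<subseteq> zmod_stab n X" "0 \<in> Y"
  shows "SS n X Y = X"
proof
  show "SS n X Y \<subseteq> X"
  proof
    fix z assume "z \<in> SS n X Y"
    then obtain x y where "x \<in> X" "y \<in> Y" "z = (x + y) mod n" by (auto simp: ss_iff)
    then show "z \<in> X" using assms(3) stab_mem' by blast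
  qed
  show "X \<subseteq> SS n X Y"
  proof
    fix x assume "x \<in> X"
    then have "x = (x + 0) mod n" using assms(2) by auto
    then show "x \<in> SS n X Y" using ss_memI[OF \<open>x \<in> X\<close> assms(4)] by metis
  qed
qed

lemma ss_eq_stab:
  assumes "0 < n" "X \<subseteq> {0..<n}" "Y \<subseteq> {0..<n}" "SS n X Y \<subseteq> X"
  shows "Y \<subseteq> zmod_stab n X"
proof
  fix y assume "y \<in> Y"
  have "tr n y X \<subseteq> X" using assms(4) \<open>y \<in> Y\<close> ss_memI[of _ X y Y n] by (auto simp: tr_def add.commute)
  moreover have "y < n" using assms(3) \<open>y \<in> Y\<close> by auto
  ultimately show "y \<in> zmod_stab n X" using stab_iff[OF assms(2)] by blast
qed

lemma stab_ss_per:
  assumes "0 < n" "Z \<subseteq> {0..<n}"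
  shows "zmod_stab n Z \<subseteq> zmod_stab n (SS n X (zmod_stab n Z))"
proof -
  have "zmod_stab n (zmod_stab n Z) \<supseteq> zmod_stab n Z"
  proof
    fix g assume g: "g \<in> zmod_stab n Z"
    have "tr n g (zmod_stab n Z) \<subseteq> zmod_stab n Z"
      using stab_add[OF assms(2) g] by (auto simp: tr_def)
    then show "g \<in> zmod_stab n (zmod_stab n Z)"
      using stab_iff[OF stab_sub] stab_le[OF g] by blast
  qed
  then show ?thesis using stab_ss2[OF assms(1) stab_sub, of Z X] by blast
qed

lemma stab_fin: "finite (zmod_stab n X)"
  by (rule finite_subset[OF stab_sub]) simp

lemma stab_card_pos: "0 < n \<Longrightarrow> X \<subseteq> {0..<n} \<Longrightarrow> 0 < card (zmod_stab n X)"
  using stab_0[of n X] stab_fin[of n X] card_gt_0_iff by blast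

lemma per_card:
  assumes "0 < n" "Z \<subseteq> {0..<n}" "X \<subseteq> {0..<n}" "SS n X (zmod_stab n Z) = X" "x \<in> X"
  shows "card (zmod_stab n Z) \<le> card X"
proof -
  have "tr n x (zmod_stab n Z) \<subseteq> X"
    using assms(4,5) ss_memI[of x X _ "zmod_stab n Z" n] by (auto simp: tr_def add.commute)
  moreover have "card (tr n x (zmod_stab n Z)) = card (zmod_stab n Z)"
    using card_tr[OF stab_sub] .
  moreover have "finite X" using assms(3) by (rule finite_subset) simp
  ultimately show ?thesis by (metis card_mono)
qed

lemma mix_arith:
  fixes g a r b k d1 d2 :: nat
  assumes "g * a \<le> k * d2" "r * b \<le> k * d1" "k \<le> g" "k \<le> a" "k \<le> r" "k \<le> b" "0 < k"
  shows "g + b \<le> d2 + k \<or> r + a \<le> d1 + k"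
proof (rule ccontr)
  assume "\<not> ?thesis"
  then have h1: "d2 + k < g + b" and h2: "d1 + k < r + a" by auto
  obtain a' b' where a': "a = k + a'" and b': "b = k + b'"
    using assms(4,6) by (metis le_add_diff_inverse)
  have "k * d2 < k * (g + b')" using h1 b' assms(7) by simp
  with assms(1) have "g * a < k * (g + b')" by linarith
  then have i1: "g * a' < k * b'" using a' by (simp add: algebra_simps)
  have "k * d1 < k * (r + a')" using h2 a' assms(7) by simp
  with assms(2) have "r * b < k * (r + a')" by linarith
  then have i2: "r * b' < k * a'" using b' by (simp add: algebra_simps)
  have "0 < k * b'" using i1 by linarith
  have "(g * a') * (r * b') < (k * b') * (k * a')"
    using mult_strict_mono[OF i1 i2 \<open>0 < k * b'\<close>] by simp
  moreover have "(k * b') * (k * a') \<le> (g * a') * (r * b')"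
  proof -
    have "k * k \<le> g * r" using assms(3,5) by (simp add: mult_le_mono)
    then have "(k * k) * (a' * b') \<le> (g * r) * (a' * b')" by (rule mult_right_mono) simp
    then show ?thesis by (simp add: algebra_simps)
  qed
  ultimately show False by simp
qed

lemma card_fibres_le:
  assumes "finite B" "f ` A \<subseteq> B" "\<And>p. p \<in> B \<Longrightarrow> card {a \<in> A. f a = p} \<le> k"
  shows "card A \<le> k * card B"
proof -
  have "A = (\<Union>p\<in>B. {a \<in> A. f a = p})" using assms(2) by auto
  then have "card A \<le> (\<Sum>p\<in>B. card {a \<in> A. f a = p})"
    using card_UN_le[OF assms(1), of "\<lambda>p. {a \<in> A. f a = p}"] by simp
  also have "\<dots> \<le> (\<Sum>p\<in>B. k)" by (rule sum_mono) (rule assms(3))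
  also have "\<dots> = k * card B" by simp
  finally show ?thesis .
qed

lemma neg_back: "l \<le> (n::nat) \<Longrightarrow> ((z + l) mod n + (n - l) mod n) mod n = z mod n"
  by (rule mod_neg_cancel2)

lemma CL:
  assumes n: "0 < n" and P: "P \<subseteq> {0..<n}" and Q: "Q \<subseteq> {0..<n}" and x: "x < n"
  shows "card {l \<in> zmod_stab n P. (x + l) mod n \<in> Q} * card {l \<in> zmod_stab n Q. (x + l) mod n \<notin> P}
         \<le> card (zmod_stab n P \<inter> zmod_stab n Q) * card (Q - P)"
proof -
  define L1 where "L1 = zmod_stab n P"
  define L2 where "L2 = zmod_stab n Q"
  define K where "K = L1 \<inter> L2"
  define Ga where "Ga = {l \<in> L1. (x + l) mod n \<in> Q}"
  define R where "R = {l \<in> L2. (x + l) mod n \<notin> P}"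
  define f where "f = (\<lambda>(a::nat, b::nat). (x + a + b) mod n)"
  have L1n: "l < n" if "l \<in> L1" for l using that stab_le unfolding L1_def by blast
  have L2n: "l < n" if "l \<in> L2" for l using that stab_le unfolding L2_def by blast
  have img: "f ` (Ga \<times> R) \<subseteq> Q - P"
  proof
    fix p assume "p \<in> f ` (Ga \<times> R)"
    then obtain a b where ab: "a \<in> Ga" "b \<in> R" "p = (x + a + b) mod n" by (auto simp: f_def)
    have "p = ((x + a) mod n + b) mod n" using ab(3) by (simp add: mod_add_left_eq)
    moreover have "(x + a) mod n \<in> Q" "b \<in> L2" using ab by (auto simp: Ga_def R_def)
    ultimately have "p \<in> Q" using stab_mem' unfolding L2_def by blast
    moreover have "p \<notin> P"
    proof
      assume "p \<in> P"
      have "a \<in> L1" using ab by (auto simp: Ga_def)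
      then have na: "(n - a) mod n \<in> L1" unfolding L1_def using stab_neg[OF P] by blast
      have "((x + b + a) mod n + (n - a) mod n) mod n = (x + b) mod n"
        using neg_back[of a n "x + b"] L1n[OF \<open>a \<in> L1\<close>] by simp
      moreover have "(p + (n - a) mod n) mod n \<in> P"
        using stab_mem'[OF na[unfolded L1_def] \<open>p \<in> P\<close>] .
      moreover have "p = (x + b + a) mod n" using ab(3) by (simp add: add_ac)
      ultimately have "(x + b) mod n \<in> P" by simp
      then show False using ab(2) by (simp add: R_def)
    qed
    ultimately show "p \<in> Q - P" by blast
  qed
  have fib: "card {ab \<in> Ga \<times> R. f ab = p} \<le> card K" for p
  proof (cases "{ab \<in> Ga \<times> R. f ab = p} = {}")
    case True then show ?thesis by (metis card.empty le0)
  next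
    case False
    then obtain a0 b0 where ab0: "(a0, b0) \<in> Ga \<times> R" "f (a0, b0) = p" by auto
    define F where "F = {ab \<in> Ga \<times> R. f ab = p}"
    define h where "h = (\<lambda>(a::nat, b::nat). (a + (n - a0)) mod n)"
    have a0n: "a0 < n" using ab0 L1n by (auto simp: Ga_def)
    have inj: "inj_on h F"
    proof (rule inj_onI)
      fix u v assume u: "u \<in> F" and v: "v \<in> F" and e: "h u = h v"
      obtain a b where [simp]: "u = (a, b)" by fastforce
      obtain a' b' where [simp]: "v = (a', b')" by fastforce
      have abin: "a < n" "b < n" "a' < n" "b' < n" using u v L1n L2n by (auto simp: F_def Ga_def R_def)
      have "((n - a0) + a) mod n = ((n - a0) + a') mod n" using e by (simp add: h_def add.commute)
      then have "a = a'" by (rule inj_onD[OF tr_inj]) (use abin in auto)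
      moreover have "((x + a) + b) mod n = ((x + a) + b') mod n"
        using u v \<open>a = a'\<close> by (simp add: F_def f_def)
      then have "b = b'" by (rule inj_onD[OF tr_inj]) (use abin in auto)
      ultimately show "u = v" by simp
    qed
    have "h ` F \<subseteq> K"
    proof
      fix q assume "q \<in> h ` F"
      then obtain a b where abF: "(a, b) \<in> F" and q: "q = (a + (n - a0)) mod n" by (auto simp: h_def)
      have a1: "a \<in> L1" and b2: "b \<in> L2" using abF by (auto simp: F_def Ga_def R_def)
      have a01: "a0 \<in> L1" and b02: "b0 \<in> L2" using ab0 by (auto simp: Ga_def R_def)
      have bn: "b < n" using L2n[OF b2] .
      have "q = (a + (n - a0) mod n) mod n" using q by (simp add: mod_add_right_eq)
      moreover have "(n - a0) mod n \<in> L1" using stab_neg[OF P] a01 unfolding L1_def by blast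
      ultimately have "q \<in> L1" using stab_add[OF P] a1 unfolding L1_def by metis
      moreover have "q \<in> L2"
      proof -
        have e: "(x + a + b) mod n = (x + a0 + b0) mod n" using abF ab0 by (simp add: F_def f_def)
        have eq: "int (a + (n - a0)) - int (b0 + (n - b)) = int (x + a + b) - int (x + a0 + b0)"
          using a0n bn by (simp add: of_nat_diff)
        have d: "int n dvd int (x + a + b) - int (x + a0 + b0)" using e modeq_int by blast
        have "int n dvd int (a + (n - a0)) - int (b0 + (n - b))" unfolding eq by (rule d)
        then have "(a + (n - a0)) mod n = (b0 + (n - b)) mod n" using modeq_int by blast
        then have "q = (b0 + (n - b) mod n) mod n" using q by (simp add: mod_add_right_eq)
        moreover have "(n - b) mod n \<in> L2" using stab_neg[OF Q] b2 unfolding L2_def by blast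
        ultimately show "q \<in> L2" using stab_add[OF Q] b02 unfolding L2_def by metis
      qed
      ultimately show "q \<in> K" by (simp add: K_def)
    qed
    have "finite K" unfolding K_def L1_def using stab_fin by blast
    have "card F = card (h ` F)" using card_image[OF inj] by simp
    also have "\<dots> \<le> card K" using card_mono[OF \<open>finite K\<close> \<open>h ` F \<subseteq> K\<close>] .
    finally show ?thesis by (simp add: F_def)
  qed
  have "finite (Q - P)" using Q by (metis finite_Diff finite_atLeastLessThan finite_subset)
  have "card (Ga \<times> R) \<le> card K * card (Q - P)"
    by (rule card_fibres_le[OF \<open>finite (Q - P)\<close> img]) (rule fib)
  then show ?thesis by (simp add: card_cartesian_product Ga_def R_def K_def L1_def L2_def)
qed

lemma tr_card_le: "tr n l K \<subseteq> S \<Longrightarrow> K \<subseteq> {0..<n} \<Longrightarrow> finite S \<Longrightarrow> card K \<le> card S"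
  using card_tr[of K n l] card_mono by metis

lemma point_lemma:
  assumes n: "0 < n" and C1: "C1 \<subseteq> {0..<n}" and C2: "C2 \<subseteq> {0..<n}"
    and z: "z \<in> C2" "z \<notin> C1"
  defines "L1 \<equiv> zmod_stab n C1" and "L2 \<equiv> zmod_stab n C2"
  defines "K \<equiv> L1 \<inter> L2"
  shows "card L1 \<le> card (C2 - C1) + card K \<or> card L2 \<le> card (C1 - C2) + card K
         \<or> card L2 \<le> card (C2 - C1)"
proof -
  define Ga where "Ga = {l \<in> L1. (z + l) mod n \<in> C2}"
  define NGa where "NGa = {l \<in> L1. (z + l) mod n \<notin> C2}"
  define R where "R = {l \<in> L2. (z + l) mod n \<in> C1}"
  define NR where "NR = {l \<in> L2. (z + l) mod n \<notin> C1}"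
  define k where "k = card K"
  have finL1: "finite L1" and finL2: "finite L2" unfolding L1_def L2_def by (rule stab_fin)+
  have Ksub: "K \<subseteq> {0..<n}" unfolding K_def L1_def using stab_sub by blast
  have "0 \<in> K" unfolding K_def L1_def L2_def using stab_0[OF n C1] stab_0[OF n C2] by blast
  then have kpos: "0 < k" unfolding k_def using finL1 K_def by (metis card_gt_0_iff empty_iff finite_Int)
  have zn: "z < n" using z C2 by auto
  have cL1: "card Ga + card NGa = card L1"
  proof -
    have "L1 = Ga \<union> NGa" "Ga \<inter> NGa = {}" by (auto simp: Ga_def NGa_def)
    then show ?thesis using finL1 card_Un_disjoint
      by (metis finite_Un)
  qed
  have cL2: "card R + card NR = card L2"
  proof -
    have "L2 = R \<union> NR" "R \<inter> NR = {}" by (auto simp: R_def NR_def)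
    then show ?thesis using finL2 card_Un_disjoint
      by (metis finite_Un)
  qed
  have CL1: "card Ga * card NR \<le> k * card (C2 - C1)"
    using CL[OF n C1 C2 zn] unfolding Ga_def NR_def k_def K_def L1_def L2_def .
  have CL2: "card R * card NGa \<le> k * card (C1 - C2)"
    using CL[OF n C2 C1 zn] unfolding R_def NGa_def k_def K_def L1_def L2_def by (simp add: Int_commute)
  have KGa: "K \<subseteq> Ga"
  proof
    fix l assume "l \<in> K"
    then have "l \<in> L1" "l \<in> L2" by (auto simp: K_def)
    then show "l \<in> Ga" using stab_mem[of l n C2 z] z(1) unfolding Ga_def L2_def by (simp add: add.commute)
  qed
  have KNR: "K \<subseteq> NR"
  proof
    fix l assume "l \<in> K"
    then have l: "l \<in> L1" "l \<in> L2" by (auto simp: K_def)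
    have "(z + l) mod n \<notin> C1"
    proof
      assume "(z + l) mod n \<in> C1"
      moreover have "(n - l) mod n \<in> L1" using stab_neg[OF C1] l(1) unfolding L1_def by blast
      ultimately have "((z + l) mod n + (n - l) mod n) mod n \<in> C1" using stab_mem' unfolding L1_def by blast
      moreover have "l \<le> n" using stab_le l(1) unfolding L1_def by (metis less_imp_le)
      ultimately have "z mod n \<in> C1" using neg_back by metis
      then show False using z zn by simp
    qed
    then show "l \<in> NR" using l by (simp add: NR_def)
  qed
  have finGa: "finite Ga" and finNR: "finite NR" and finR: "finite R" and finNGa: "finite NGa"
    using finL1 finL2 by (auto simp: Ga_def NR_def R_def NGa_def)
  have kGa: "k \<le> card Ga" unfolding k_def by (rule card_mono[OF finGa KGa])
  have kNR: "k \<le> card NR" unfolding k_def by (rule card_mono[OF finNR KNR])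
  have kR: "k \<le> card R" if ne: "R \<noteq> {}"
  proof -
    obtain l where l: "l \<in> R" using ne by blast
    have "tr n l K \<subseteq> R"
    proof
      fix q assume "q \<in> tr n l K"
      then obtain c where c: "c \<in> K" "q = (l + c) mod n" by (auto simp: tr_def)
      have lL: "l \<in> L2" and lC: "(z + l) mod n \<in> C1" using l by (auto simp: R_def)
      have "q \<in> L2" using stab_add[OF C2, of l c] lL c unfolding L2_def K_def by auto
      moreover have "(z + q) mod n = ((z + l) mod n + c) mod n" using c(2)
        by (simp add: mod_add_left_eq mod_add_right_eq add.assoc)
      moreover have "((z + l) mod n + c) mod n \<in> C1" using stab_mem'[of c n C1] lC c(1)
        unfolding K_def L1_def by auto
      ultimately show "q \<in> R" by (simp add: R_def)
    qed
    then show ?thesis unfolding k_def using tr_card_le[OF _ Ksub finR] by blast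
  qed
  have kNGa: "k \<le> card NGa" if ne: "NGa \<noteq> {}"
  proof -
    obtain l where l: "l \<in> NGa" using ne by blast
    have "tr n l K \<subseteq> NGa"
    proof
      fix q assume "q \<in> tr n l K"
      then obtain c where c: "c \<in> K" "q = (l + c) mod n" by (auto simp: tr_def)
      have lL: "l \<in> L1" and lC: "(z + l) mod n \<notin> C2" using l by (auto simp: NGa_def)
      have "q \<in> L1" using stab_add[OF C1, of l c] lL c unfolding L1_def K_def by auto
      moreover have "(z + q) mod n = ((z + l) mod n + c) mod n" using c(2)
        by (simp add: mod_add_left_eq mod_add_right_eq add.assoc)
      moreover have "((z + l) mod n + c) mod n \<notin> C2"
      proof
        assume "((z + l) mod n + c) mod n \<in> C2"
        moreover have "c \<in> L2" using c(1) by (simp add: K_def)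
        then have "(n - c) mod n \<in> L2" using stab_neg[OF C2] unfolding L2_def by blast
        ultimately have "(((z + l) mod n + c) mod n + (n - c) mod n) mod n \<in> C2"
          using stab_mem' unfolding L2_def by blast
        moreover have "c \<le> n" using stab_le \<open>c \<in> L2\<close> unfolding L2_def by (metis less_imp_le)
        ultimately have "(z + l) mod n mod n \<in> C2" using neg_back by metis
        then show False using lC by simp
      qed
      ultimately show "q \<in> NGa" by (simp add: NGa_def)
    qed
    then show ?thesis unfolding k_def using tr_card_le[OF _ Ksub finNGa] by blast
  qed
  show ?thesis
  proof (cases "R = {}")
    case True
    then have "card NR = card L2" using cL2 by simp
    then have "k * card L2 \<le> k * card (C2 - C1)"
      using CL1 kGa by (metis le_trans mult_le_mono1)
    then have "card L2 \<le> card (C2 - C1)" using kpos by simp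
    then show ?thesis by simp
  next
    case Rne: False
    show ?thesis
    proof (cases "NGa = {}")
      case True
      then have "card Ga = card L1" using cL1 by simp
      then have "card L1 * k \<le> k * card (C2 - C1)"
        using CL1 kNR by (metis le_trans mult_le_mono2)
      then have "card L1 \<le> card (C2 - C1)" using kpos by (simp add: mult.commute)
      then show ?thesis by simp
    next
      case False
      have "card Ga + card NGa \<le> card (C2 - C1) + k \<or> card R + card NR \<le> card (C1 - C2) + k"
        by (rule mix_arith[OF CL1 CL2 kGa kNR kR[OF Rne] kNGa[OF False] kpos])
      then have "card L1 \<le> card (C2 - C1) + card K \<or> card L2 \<le> card (C1 - C2) + card K"
        using cL1 cL2 unfolding k_def by simp
      then show ?thesis by blast
    qed
  qed
qed

lemma UL:
  assumes n: "0 < n" and C1: "C1 \<subseteq> {0..<n}" and C2: "C2 \<subseteq> {0..<n}"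
  shows "min (card C1 + card (zmod_stab n C1)) (card C2 + card (zmod_stab n C2))
         \<le> card (C1 \<union> C2) + card (zmod_stab n (C1 \<union> C2))"
proof (cases "C2 \<subseteq> C1")
  case True
  then have "C1 \<union> C2 = C1" by blast
  then show ?thesis by simp
next
  case nsub2: False
  show ?thesis
  proof (cases "C1 \<subseteq> C2")
    case True
    then have "C1 \<union> C2 = C2" by blast
    then show ?thesis by simp
  next
    case nsub1: False
    obtain x where x: "x \<in> C2" "x \<notin> C1" using nsub2 by blast
    obtain y where y: "y \<in> C1" "y \<notin> C2" using nsub1 by blast
    define L1 where "L1 = zmod_stab n C1"
    define L2 where "L2 = zmod_stab n C2"
    define K where "K = L1 \<inter> L2"
    have U: "C1 \<union> C2 \<subseteq> {0..<n}" using C1 C2 by blast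
    have KM: "K \<subseteq> zmod_stab n (C1 \<union> C2)"
    proof
      fix g assume g: "g \<in> K"
      then have g1: "g \<in> L1" and g2: "g \<in> L2" by (auto simp: K_def)
      have "tr n g (C1 \<union> C2) \<subseteq> C1 \<union> C2"
        using stab_mem[of g n C1] stab_mem[of g n C2] g1 g2 by (auto simp: tr_def L1_def L2_def)
      moreover have "g < n" using g1 stab_le unfolding L1_def by blast
      ultimately show "g \<in> zmod_stab n (C1 \<union> C2)" using stab_iff[OF U] by blast
    qed
    have cKM: "card K \<le> card (zmod_stab n (C1 \<union> C2))" by (rule card_mono[OF stab_fin KM])
    have fin1: "finite C1" and fin2: "finite C2" using C1 C2 finite_subset by auto
    have cU1: "card (C1 \<union> C2) = card C1 + card (C2 - C1)"
      using card_Un_disjoint[of C1 "C2 - C1"] fin1 fin2 by (simp add: Un_Diff_cancel)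
    have cU2: "card (C1 \<union> C2) = card C2 + card (C1 - C2)"
      using card_Un_disjoint[of C2 "C1 - C2"] fin1 fin2 by (simp add: Un_Diff_cancel Un_commute)
    have px: "card L1 \<le> card (C2 - C1) + card K \<or> card L2 \<le> card (C1 - C2) + card K
         \<or> card L2 \<le> card (C2 - C1)"
      using point_lemma[OF n C1 C2 x] unfolding L1_def L2_def K_def .
    have py: "card L2 \<le> card (C1 - C2) + card K \<or> card L1 \<le> card (C2 - C1) + card K
         \<or> card L1 \<le> card (C1 - C2)"
      using point_lemma[OF n C2 C1 y] unfolding L1_def L2_def K_def by (simp add: Int_commute)
    have "card L1 \<le> card (C2 - C1) + card K \<or> card L2 \<le> card (C1 - C2) + card K"
      using px py by linarith
    then show ?thesis using cU1 cU2 cKM unfolding L1_def L2_def by linarith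
  qed
qed

lemma UL_family:
  assumes n: "0 < n" and fin: "finite F" and ne: "F \<noteq> {}"
    and h: "\<And>C. C \<in> F \<Longrightarrow> C \<subseteq> {0..<n} \<and> m \<le> card C + card (zmod_stab n C)"
  shows "m \<le> card (\<Union>F) + card (zmod_stab n (\<Union>F))"
  using fin ne h
proof (induction F rule: finite_ne_induct)
  case (singleton x)
  then show ?case by simp
next
  case (insert C F)
  have C: "C \<subseteq> {0..<n}" "m \<le> card C + card (zmod_stab n C)" using insert.prems by auto
  have IH: "m \<le> card (\<Union>F) + card (zmod_stab n (\<Union>F))" using insert.IH insert.prems by auto
  have UF: "\<Union>F \<subseteq> {0..<n}" using insert.prems by blast
  have "min (card C + card (zmod_stab n C)) (card (\<Union>F) + card (zmod_stab n (\<Union>F)))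
         \<le> card (C \<union> \<Union>F) + card (zmod_stab n (C \<union> \<Union>F))"
    by (rule UL[OF n C(1) UF])
  then show ?case using C(2) IH by simp
qed

definition KN where
  "KN n A B \<longleftrightarrow> card (SS n A (zmod_stab n (SS n A B))) + card (SS n B (zmod_stab n (SS n A B)))
     \<le> card (SS n A B) + card (zmod_stab n (SS n A B))"

lemma SS_per_assoc:
  assumes n: "0 < n" and Z: "Z \<subseteq> {0..<n}"
  shows "SS n (SS n A (zmod_stab n Z)) (zmod_stab n Z) = SS n A (zmod_stab n Z)"
  by (simp add: ss_assoc stab_self[OF n Z])

lemma SS_per_sum:
  assumes n: "0 < n" and Z: "Z \<subseteq> {0..<n}"
  shows "SS n (SS n A (zmod_stab n Z)) (SS n B (zmod_stab n Z)) = SS n (SS n A B) (zmod_stab n Z)"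
proof -
  let ?H = "zmod_stab n Z"
  have "SS n ?H (SS n B ?H) = SS n B ?H"
    by (metis ss_assoc ss_comm stab_self[OF n Z])
  then show ?thesis by (metis ss_assoc)
qed

lemma ss_sup0:
  assumes "0 < n" "X \<subseteq> {0..<n}" "Z \<subseteq> {0..<n}"
  shows "X \<subseteq> SS n X (zmod_stab n Z)"
proof -
  have "SS n X {0} \<subseteq> SS n X (zmod_stab n Z)" using stab_0[OF assms(1,3)] by (intro ss_mono) auto
  then show ?thesis using ss_zero[OF assms(2)] by simp
qed

definition mu where
  "mu n A B = card (SS n A B) * (n + 1) + card (SS n B (zmod_stab n (SS n A B)))"

lemma kneser_step:
  assumes n: "0 < n" and A: "A \<subseteq> {0..<n}" "A \<noteq> {}" and B: "B \<subseteq> {0..<n}" "B \<noteq> {}"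
    and IH: "\<And>A2 B2. A2 \<subseteq> {0..<n} \<Longrightarrow> A2 \<noteq> {} \<Longrightarrow> B2 \<subseteq> {0..<n} \<Longrightarrow> B2 \<noteq> {}
              \<Longrightarrow> mu n A2 B2 < mu n A B \<Longrightarrow> KN n A2 B2"
  shows "KN n A B"
proof -
  define S where "S = SS n A B"
  define H where "H = zmod_stab n S"
  define A' where "A' = SS n A H"
  define B' where "B' = SS n B H"
  define m where "m = card A' + card B'"
  have G: "S \<subseteq> {0..<n}" unfolding S_def by (rule ss_sub[OF n])
  have Hsub: "H \<subseteq> {0..<n}" unfolding H_def by (rule stab_sub)
  have SAB: "SS n A' B' = S"
    unfolding A'_def B'_def H_def using SS_per_sum[OF n G] ss_stab_self[OF n G] by (simp add: S_def)
  have perA: "SS n A' H = A'" unfolding A'_def H_def by (rule SS_per_assoc[OF n G])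
  have perB: "SS n B' H = B'" unfolding B'_def H_def by (rule SS_per_assoc[OF n G])
  have A'G: "A' \<subseteq> {0..<n}" and B'G: "B' \<subseteq> {0..<n}" unfolding A'_def B'_def using ss_sub[OF n] by auto
  have AA': "A \<subseteq> A'" unfolding A'_def H_def by (rule ss_sup0[OF n A(1) G])
  have BB': "B \<subseteq> B'" unfolding B'_def H_def by (rule ss_sup0[OF n B(1) G])
  have A'ne: "A' \<noteq> {}" and B'ne: "B' \<noteq> {}" using AA' BB' A(2) B(2) by auto
  have finA': "finite A'" and finB': "finite B'" and finS: "finite S"
    using A'G B'G G by (auto intro: finite_subset)
  have muAB: "mu n A B = card S * (n + 1) + card B'"
    unfolding mu_def S_def[symmetric] H_def[symmetric] B'_def ..
  have goal: "m \<le> card S + card H"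
  proof (cases "\<exists>b0\<in>B'. \<forall>b\<in>B'. (b + (n - b0)) mod n \<in> H")
    case True
    then obtain b0 where b0: "b0 \<in> B'" "\<And>b. b \<in> B' \<Longrightarrow> (b + (n - b0)) mod n \<in> H" by blast
    have b0n: "b0 < n" using b0(1) B'G by auto
    have "B' \<subseteq> tr n b0 H"
    proof
      fix b assume b: "b \<in> B'"
      have bn: "b < n" using b B'G by auto
      have "(b0 + (b + (n - b0)) mod n) mod n = (b0 + (b + (n - b0))) mod n" by (simp add: mod_add_right_eq)
      also have "b0 + (b + (n - b0)) = b + n" using b0n by simp
      finally have "(b0 + (b + (n - b0)) mod n) mod n = b" using bn by simp
      then show "b \<in> tr n b0 H" using tr_mem[OF b0(2)[OF b], of b0 n] by simp
    qed
    then have c1: "card B' \<le> card H"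
      using card_mono[OF finite_subset[OF tr_sub[OF n] finite_atLeastLessThan]] card_tr[OF Hsub] by metis
    have "tr n b0 A' \<subseteq> S"
    proof
      fix w assume "w \<in> tr n b0 A'"
      then obtain a where "a \<in> A'" "w = (b0 + a) mod n" by (auto simp: tr_def)
      then show "w \<in> S" using ss_memI[of a A' b0 B' n] b0(1) SAB by (simp add: add.commute)
    qed
    then have c2: "card A' \<le> card S" using card_mono[OF finS] card_tr[OF A'G] by metis
    show ?thesis using c1 c2 unfolding m_def by simp
  next
    case False
    then have nc: "\<And>b0. b0 \<in> B' \<Longrightarrow> \<exists>b\<in>B'. (b + (n - b0)) mod n \<notin> H" by blast
    define Ag where "Ag = (\<lambda>g. A' \<union> tr n g B')"
    define Bg where "Bg = (\<lambda>g. {b \<in> B'. (b + g) mod n \<in> A'})"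
    define Cg where "Cg = (\<lambda>g. SS n (Ag g) (Bg g))"
    define Ga where "Ga = {g \<in> {0..<n}. Bg g \<noteq> {} \<and> Bg g \<noteq> B'}"
    have AgG: "Ag g \<subseteq> {0..<n}" for g unfolding Ag_def using A'G tr_sub[OF n] by blast
    have BgG: "Bg g \<subseteq> {0..<n}" for g unfolding Bg_def using B'G by blast
    have BgB: "Bg g \<subseteq> B'" for g unfolding Bg_def by blast
    have T1: "Cg g \<subseteq> S" for g
    proof
      fix w assume "w \<in> Cg g"
      then obtain a b where ab: "a \<in> Ag g" "b \<in> Bg g" "w = (a + b) mod n" by (auto simp: Cg_def ss_iff)
      have bB: "b \<in> B'" and bg: "(b + g) mod n \<in> A'" using ab(2) by (auto simp: Bg_def)
      show "w \<in> S"
      proof (cases "a \<in> A'")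
        case True
        then show ?thesis using ss_memI[OF True bB, of n] ab(3) SAB by simp
      next
        case False
        then obtain b1 where b1: "b1 \<in> B'" "a = (g + b1) mod n" using ab(1) by (auto simp: Ag_def tr_def)
        have "w = (b1 + (b + g) mod n) mod n" using ab(3) b1(2)
          by (simp add: mod_add_left_eq mod_add_right_eq add_ac)
        then show ?thesis using ss_memI[OF b1(1) bg, of n] ss_comm[of n B' A'] SAB by simp
      qed
    qed
    have T2: "card (Ag g) + card (Bg g) = m" for g
    proof -
      have fintr: "finite (tr n g B')" using finite_subset[OF tr_sub[OF n]] by blast
      have "(\<lambda>b. (g + b) mod n) ` Bg g = A' \<inter> tr n g B'"
      proof
        show "(\<lambda>b. (g + b) mod n) ` Bg g \<subseteq> A' \<inter> tr n g B'"
          by (auto simp: Bg_def tr_def add.commute)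
        show "A' \<inter> tr n g B' \<subseteq> (\<lambda>b. (g + b) mod n) ` Bg g"
          by (auto simp: Bg_def tr_def add.commute)
      qed
      moreover have "inj_on (\<lambda>b. (g + b) mod n) (Bg g)" by (rule inj_on_subset[OF tr_inj BgG])
      ultimately have "card (Bg g) = card (A' \<inter> tr n g B')" by (metis card_image)
      moreover have "card (Ag g) + card (A' \<inter> tr n g B') = card A' + card (tr n g B')"
        unfolding Ag_def by (rule card_Un_Int[OF finA' fintr, symmetric])
      moreover have "card (tr n g B') = card B'" by (rule card_tr[OF B'G])
      ultimately show ?thesis unfolding m_def by simp
    qed
    have cover: "S \<subseteq> \<Union> (Cg ` Ga)"
    proof
      fix w assume "w \<in> S"
      then obtain a b where ab: "a \<in> A'" "b \<in> B'" "w = (a + b) mod n" using SAB by (auto simp: ss_iff)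
      have bn: "b < n" using ab(2) B'G by auto
      have "\<exists>g\<in>Ga. b \<in> Bg g"
      proof (rule ccontr)
        assume nog: "\<not> (\<exists>g\<in>Ga. b \<in> Bg g)"
        obtain b'' where b'': "b'' \<in> B'" "(b'' + (n - b)) mod n \<notin> H" using nc[OF ab(2)] by blast
        define d where "d = (b'' + (n - b)) mod n"
        have "tr n d A' \<subseteq> A'"
        proof
          fix q assume "q \<in> tr n d A'"
          then obtain a'' where a'': "a'' \<in> A'" "q = (d + a'') mod n" by (auto simp: tr_def)
          have a''n: "a'' < n" using a''(1) A'G by auto
          define g where "g = (a'' + (n - b)) mod n"
          have "(b + g) mod n = (b + (a'' + (n - b))) mod n" by (simp add: g_def mod_add_right_eq)
          also have "b + (a'' + (n - b)) = a'' + n" using bn by simp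
          finally have "(b + g) mod n = a''" using a''n by simp
          then have bBg: "b \<in> Bg g" using ab(2) a''(1) by (simp add: Bg_def)
          have "g \<in> {0..<n}" using n by (simp add: g_def)
          then have "Bg g = B'" using nog bBg unfolding Ga_def by blast
          then have "(b'' + g) mod n \<in> A'" using b''(1) by (auto simp: Bg_def)
          moreover have "q = (b'' + g) mod n" using a''(2)
            by (simp add: d_def g_def mod_add_left_eq mod_add_right_eq add_ac)
          ultimately show "q \<in> A'" by simp
        qed
        moreover have "d < n" using n by (simp add: d_def)
        ultimately have "d \<in> zmod_stab n A'" using stab_iff[OF A'G] by blast
        then have "d \<in> H" using stab_ss[OF n A'G, of B'] SAB unfolding H_def by auto
        then show False using b''(2) by (simp add: d_def)
      qed
      then obtain g where g: "g \<in> Ga" "b \<in> Bg g" by blast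
      have "w \<in> SS n A' (Bg g)" using ss_memI[OF ab(1) g(2)] ab(3) by simp
      also have "\<dots> \<subseteq> Cg g" unfolding Cg_def Ag_def by (rule ss_mono) auto
      finally show "w \<in> \<Union> (Cg ` Ga)" using g(1) by blast
    qed
    have Seq: "\<Union> (Cg ` Ga) = S" using cover T1 by blast
    have bound: "m \<le> card (Cg g) + card (zmod_stab n (Cg g))" if g: "g \<in> Ga" for g
    proof -
      define L where "L = zmod_stab n (Cg g)"
      have Bgne: "Bg g \<noteq> {}" and BgneB: "Bg g \<noteq> B'" using g by (auto simp: Ga_def)
      have Agne: "Ag g \<noteq> {}" using A'ne by (auto simp: Ag_def)
      have CgG: "Cg g \<subseteq> {0..<n}" using T1 G by blast
      have cBg: "card (Bg g) < card B'" using psubset_card_mono[OF finB'] BgB BgneB by blast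
      have mult: "mu n (Ag g) (Bg g) < mu n A B"
      proof (cases "card (Cg g) < card S")
        case True
        have "card (SS n (Bg g) L) \<le> n"
          using card_mono[OF finite_atLeastLessThan ss_sub[OF n]] by (metis card_atLeastLessThan diff_zero)
        moreover have eqC: "SS n (Ag g) (Bg g) = Cg g" by (simp add: Cg_def)
        ultimately have "mu n (Ag g) (Bg g) \<le> card (Cg g) * (n + 1) + n"
          unfolding mu_def eqC L_def[symmetric] by simp
        also have "\<dots> < (card (Cg g) + 1) * (n + 1)" by simp
        also have "\<dots> \<le> card S * (n + 1)" using True by (intro mult_right_mono) auto
        finally show ?thesis unfolding muAB by simp
      next
        case False
        have "card (Cg g) \<le> card S" by (rule card_mono[OF finS T1])
        with False have "card (Cg g) = card S" by simp
        then have CS: "Cg g = S" by (rule card_subset_eq[OF finS T1])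
        then have LH: "L = H" unfolding L_def H_def by simp
        have "SS n (Bg g) H = Bg g"
        proof
          show "Bg g \<subseteq> SS n (Bg g) H" unfolding H_def by (rule ss_sup0[OF n BgG G])
          show "SS n (Bg g) H \<subseteq> Bg g"
          proof
            fix w assume "w \<in> SS n (Bg g) H"
            then obtain b h where bh: "b \<in> Bg g" "h \<in> H" "w = (b + h) mod n" by (auto simp: ss_iff)
            have "w \<in> B'" using ss_memI[of b B' h H n] bh BgB perB by auto
            moreover have "(w + g) mod n = ((b + g) mod n + h) mod n"
            proof -
              have e1: "(w + g) mod n = (b + h + g) mod n" using bh(3) by (simp add: mod_add_left_eq)
              have e2: "((b + g) mod n + h) mod n = (b + g + h) mod n" by (simp add: mod_add_left_eq)
              show ?thesis unfolding e1 e2 by (simp add: add_ac)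
            qed
            moreover have "((b + g) mod n + h) mod n \<in> A'"
              using ss_memI[of "(b + g) mod n" A' h H n] bh perA by (auto simp: Bg_def)
            ultimately show "w \<in> Bg g" by (simp add: Bg_def)
          qed
        qed
        moreover have eqC: "SS n (Ag g) (Bg g) = S" using CS by (simp add: Cg_def)
        ultimately have "mu n (Ag g) (Bg g) = card S * (n + 1) + card (Bg g)"
          unfolding mu_def eqC H_def[symmetric] by simp
        then show ?thesis unfolding muAB using cBg by simp
      qed
      have eqC: "SS n (Ag g) (Bg g) = Cg g" by (simp add: Cg_def)
      have "KN n (Ag g) (Bg g)" by (rule IH[OF AgG Agne BgG Bgne mult])
      then have k: "card (SS n (Ag g) L) + card (SS n (Bg g) L) \<le> card (Cg g) + card L"
        unfolding KN_def eqC L_def[symmetric] .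
      have "card (Ag g) \<le> card (SS n (Ag g) L)"
        using card_mono[OF ss_fin[OF n] ss_sup0[OF n AgG CgG]] unfolding L_def .
      moreover have "card (Bg g) \<le> card (SS n (Bg g) L)"
        using card_mono[OF ss_fin[OF n] ss_sup0[OF n BgG CgG]] unfolding L_def .
      ultimately show ?thesis using k T2[of g] unfolding L_def by simp
    qed
    have Gafin: "finite Ga" unfolding Ga_def by simp
    have "S \<noteq> {}" using SAB ss_ne[OF A'ne B'ne, of n] by simp
    then have Gane: "Cg ` Ga \<noteq> {}" using Seq by auto
    have "m \<le> card (\<Union> (Cg ` Ga)) + card (zmod_stab n (\<Union> (Cg ` Ga)))"
    proof (rule UL_family[OF n _ Gane])
      show "finite (Cg ` Ga)" using Gafin by simp
      fix C assume "C \<in> Cg ` Ga"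
      then obtain g where "g \<in> Ga" "C = Cg g" by blast
      then show "C \<subseteq> {0..<n} \<and> m \<le> card C + card (zmod_stab n C)" using bound T1 G by blast
    qed
    then show ?thesis using Seq unfolding H_def by simp
  qed
  then show ?thesis unfolding KN_def m_def A'_def B'_def H_def S_def .
qed

theorem kneser:
  assumes n: "0 < n" and A: "A \<subseteq> {0..<n}" "A \<noteq> {}" and B: "B \<subseteq> {0..<n}" "B \<noteq> {}"
  shows "KN n A B"
proof -
  have "\<forall>A B. mu n A B = N \<longrightarrow> A \<subseteq> {0..<n} \<longrightarrow> A \<noteq> {} \<longrightarrow> B \<subseteq> {0..<n} \<longrightarrow> B \<noteq> {}
          \<longrightarrow> KN n A B" for N
  proof (induction N rule: less_induct)
    case (less N)
    show ?case
    proof (intro allI impI)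
      fix A B assume h: "mu n A B = N" "A \<subseteq> {0..<n}" "A \<noteq> {}" "B \<subseteq> {0..<n}" "B \<noteq> {}"
      show "KN n A B"
      proof (rule kneser_step[OF n h(2,3,4,5)])
        fix A2 B2 assume h2: "A2 \<subseteq> {0..<n}" "A2 \<noteq> {}" "B2 \<subseteq> {0..<n}" "B2 \<noteq> {}" "mu n A2 B2 < mu n A B"
        then show "KN n A2 B2" using less.IH[of "mu n A2 B2"] h(1) by blast
      qed
    qed
  qed
  then show ?thesis using A B by blast
qed

lemma kneser_per:
  assumes n: "0 < n" and X: "X \<subseteq> {0..<n}" "X \<noteq> {}" and W: "W \<subseteq> {0..<n}" "W \<noteq> {}"
    and K: "zmod_stab n (SS n X W) = K"
    and perX: "SS n X K = X" and perW: "SS n W K = W"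
  shows "card X + card W \<le> card (SS n X W) + card K"
  using kneser[OF n X W] unfolding KN_def K perX perW .

lemma iter_sub: "0 < n \<Longrightarrow> X \<subseteq> {0..<n} \<Longrightarrow> zmod_iter_sum n j X \<subseteq> {0..<n}"
  by (induction n j X rule: zmod_iter_sum.induct) (auto simp: ss_sub)

lemma iter_ne: "X \<noteq> {} \<Longrightarrow> zmod_iter_sum n j X \<noteq> {}"
  by (induction n j X rule: zmod_iter_sum.induct) (auto simp: ss_ne)

lemma ss_swap: "SS n (SS n P Q) (SS n R U) = SS n (SS n P R) (SS n Q U)"
proof -
  have "SS n (SS n P Q) (SS n R U) = SS n P (SS n (SS n Q R) U)" by (simp only: ss_assoc)
  also have "SS n Q R = SS n R Q" by (rule ss_comm)
  also have "SS n P (SS n (SS n R Q) U) = SS n (SS n P R) (SS n Q U)" by (simp only: ss_assoc)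
  finally show ?thesis .
qed

lemma star1: "A \<subseteq> {0..<n} \<Longrightarrow> star_C n C 1 A = A"
  by (simp add: star_C_def ss_zero)

lemma star1': "A \<subseteq> {0..<n} \<Longrightarrow> star_C n C (Suc 0) A = A"
  using star1 by simp

lemma starSuc:
  assumes "1 \<le> j" "A \<subseteq> {0..<n}"
  shows "star_C n C (Suc j) A = SS n (star_C n C j A) (SS n A C)"
proof (cases j)
  case 0 then show ?thesis using assms by simp
next
  case (Suc i)
  show ?thesis
  proof (cases i)
    case 0
    then have j1: "j = 1" using Suc by simp
    have "star_C n C (Suc j) A = SS n (SS n A A) C" by (simp add: star_C_def j1)
    moreover have "SS n (star_C n C j A) (SS n A C) = SS n (SS n A A) C"
      by (simp add: j1 star1'[OF assms(2)] ss_assoc)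
    ultimately show ?thesis by simp
  next
    case (Suc i')
    have "star_C n C (Suc j) A
        = SS n (SS n (zmod_iter_sum n j A) A) (SS n (zmod_iter_sum n (Suc i') C) C)"
      using \<open>j = Suc i\<close> Suc by (simp add: star_C_def)
    also have "\<dots> = SS n (SS n (zmod_iter_sum n j A) (zmod_iter_sum n (Suc i') C)) (SS n A C)"
      by (rule ss_swap)
    also have "SS n (zmod_iter_sum n j A) (zmod_iter_sum n (Suc i') C) = star_C n C j A"
      using \<open>j = Suc i\<close> Suc by (simp add: star_C_def)
    finally show ?thesis .
  qed
qed

lemma mult_stab:
  assumes "0 < n" "X \<subseteq> {0..<n}" "g \<in> zmod_stab n X"
  shows "(j * g) mod n \<in> zmod_stab n X"
proof (induction j)
  case 0 then show ?case using stab_0[OF assms(1,2)] by simp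
next
  case (Suc j)
  have "(Suc j * g) mod n = ((j * g) mod n + g) mod n" by (simp add: mod_add_left_eq mod_add_right_eq add.commute)
  then show ?case using stab_add[OF assms(2) Suc assms(3)] by simp
qed

lemma cyc_stab:
  assumes n: "0 < n" and s: "1 \<le> s" and X: "X \<subseteq> {0..<n}" and sK: "s mod n \<in> zmod_stab n X"
  shows "zmod_cyclic n (gcd s n) \<subseteq> zmod_stab n X"
proof
  fix w assume "w \<in> zmod_cyclic n (gcd s n)"
  then obtain i where w: "w = (i * gcd s n) mod n" by (auto simp: zmod_cyclic_def)
  obtain x y where xy: "s * x = n * y + gcd s n" using bezout_nat[of s n] s by auto
  have "(i * x * s) mod n = (n * (i * y) + i * gcd s n) mod n"
    using arg_cong[OF xy, of "\<lambda>t. (i * t) mod n"] by (simp add: algebra_simps)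
  also have "\<dots> = (i * gcd s n) mod n" by simp
  finally have "w = (i * x * (s mod n)) mod n" using w by (simp add: mod_mult_right_eq)
  then show "w \<in> zmod_stab n X" using mult_stab[OF n X sK] by simp
qed

theorem lemma4p2:
  fixes n k l s :: nat and A :: "nat set"
  assumes "n \<ge> 1" and "k > l" and "l \<ge> 1" and "s \<ge> 1"
    and "A \<subseteq> {0..<n}"
    and "C_sum_free n {0, s mod n} k l A"
    and "\<not> zmod_cyclic n (gcd s n) \<subseteq> zmod_stab n (star_C n {0, s mod n} k A)"
  shows "card A \<le> n div (k + l)"
proof (cases "A = {}")
  case True then show ?thesis by simp
next
  case Ane: False
  have n: "0 < n" using assms(1) by simp
  have AG: "A \<subseteq> {0..<n}" by (rule assms(5))
  define s' where "s' = s mod n"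
  define C where "C = {0, s'}"
  define T where "T = (\<lambda>j. star_C n C j A)"
  define K where "K = zmod_stab n (T k)"
  define W0 where "W0 = SS n A C"
  define P where "P = (\<lambda>j. SS n (T j) K)"
  define V where "V = SS n A K"
  define W where "W = SS n W0 K"
  have s'n: "s' < n" using n by (simp add: s'_def)
  have CG: "C \<subseteq> {0..<n}" using n s'n by (auto simp: C_def)
  have Cne: "C \<noteq> {}" by (simp add: C_def)
  have TG: "T j \<subseteq> {0..<n}" for j unfolding T_def star_C_def by (rule ss_sub[OF n])
  have Tne: "T j \<noteq> {}" for j
    unfolding T_def star_C_def using iter_ne[OF Ane] iter_ne[OF Cne] ss_ne by blast
  have T1: "T 1 = A" unfolding T_def by (rule star1[OF AG])
  have TS: "T (Suc j) = SS n (T j) W0" if "1 \<le> j" for j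
    unfolding T_def W0_def by (rule starSuc[OF that AG])
  have k1: "1 \<le> k" using assms(2,3) by simp
  have s'K: "s' \<notin> K"
  proof
    assume "s' \<in> K"
    then have "zmod_cyclic n (gcd s n) \<subseteq> zmod_stab n (T k)"
      using cyc_stab[OF n assms(4) TG] unfolding K_def s'_def by blast
    then show False using assms(7) unfolding T_def C_def s'_def by simp
  qed
  have KG: "K \<subseteq> {0..<n}" unfolding K_def by (rule stab_sub)
  have PG: "P j \<subseteq> {0..<n}" for j unfolding P_def by (rule ss_sub[OF n])
  have Pne: "P j \<noteq> {}" for j
    unfolding P_def K_def using Tne stab_0[OF n TG] ss_ne by blast
  have perP: "SS n (P j) K = P j" for j unfolding P_def K_def by (rule SS_per_assoc[OF n TG])
  have perW: "SS n W K = W" unfolding W_def K_def by (rule SS_per_assoc[OF n TG])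
  have WG: "W \<subseteq> {0..<n}" unfolding W_def by (rule ss_sub[OF n])
  have Wne: "W \<noteq> {}" unfolding W_def W0_def K_def
    using ss_ne[OF Ane Cne] stab_0[OF n TG] ss_ne by blast
  have PS: "P (Suc j) = SS n (P j) W" if "1 \<le> j" for j
  proof -
    have "P (Suc j) = SS n (SS n (T j) W0) K" unfolding P_def using TS[OF that] by simp
    also have "\<dots> = SS n (P j) W" unfolding P_def W_def K_def by (rule SS_per_sum[OF n TG, symmetric])
    finally show ?thesis .
  qed
  have Pk: "P k = T k" unfolding P_def K_def by (rule ss_stab_self[OF n TG])
  have stabP_sub: "\<forall>j. 1 \<le> j \<longrightarrow> j + d = k \<longrightarrow> zmod_stab n (P j) \<subseteq> K" for d
  proof (induction d)
    case 0
    then show ?case using Pk by (auto simp: K_def)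
  next
    case (Suc d)
    show ?case
    proof (intro allI impI)
      fix j assume j: "1 \<le> j" "j + Suc d = k"
      have "zmod_stab n (P j) \<subseteq> zmod_stab n (SS n (P j) W)" by (rule stab_ss[OF n PG])
      also have "\<dots> = zmod_stab n (P (Suc j))" using PS[OF j(1)] by simp
      also have "\<dots> \<subseteq> K" using Suc.IH j by simp
      finally show "zmod_stab n (P j) \<subseteq> K" .
    qed
  qed
  have stabP: "zmod_stab n (P j) = K" if "1 \<le> j" "j \<le> k" for j
  proof
    show "zmod_stab n (P j) \<subseteq> K" using stabP_sub[of "k - j"] that by simp
    show "K \<subseteq> zmod_stab n (P j)" unfolding P_def K_def by (rule stab_ss_per[OF n TG])
  qed
  have PV: "P 1 = V" unfolding P_def V_def using T1 by simp
  have VG: "V \<subseteq> {0..<n}" unfolding V_def by (rule ss_sub[OF n])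
  have stabV: "zmod_stab n V = K" using stabP[of 1] k1 PV by simp
  have cardW: "card V + card K \<le> card W"
  proof -
    have "W = SS n V C" unfolding W_def W0_def V_def by (simp add: ss_assoc ss_comm[of n C K])
    also have "\<dots> = V \<union> tr n s' V"
    proof -
      have "C = {0} \<union> {s'}" by (auto simp: C_def)
      then show ?thesis using ss_Un2[of n V "{0}" "{s'}"] ss_zero[OF VG] ss_single by simp
    qed
    finally have Weq: "W = V \<union> tr n s' V" .
    have finV: "finite V" using VG by (rule finite_subset) simp
    have finTV: "finite (tr n s' V)" using tr_sub[OF n] by (rule finite_subset) simp
    have "\<not> tr n s' V \<subseteq> V"
    proof
      assume "tr n s' V \<subseteq> V"
      then have "s' \<in> zmod_stab n V" using stab_iff[OF VG] s'n by blast
      then show False using s'K stabV by simp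
    qed
    then obtain u where u: "u \<in> tr n s' V" "u \<notin> V" by blast
    have un: "u < n" using subsetD[OF tr_sub[OF n, of s' V] u(1)] by simp
    have "tr n u K \<subseteq> tr n s' V - V"
    proof
      fix q assume "q \<in> tr n u K"
      then obtain c where c: "c \<in> K" "q = (u + c) mod n" by (auto simp: tr_def)
      obtain v where v: "v \<in> V" "u = (s' + v) mod n" using u(1) by (auto simp: tr_def)
      have "q = (s' + (v + c) mod n) mod n" using c(2) v(2)
        by (simp add: mod_add_left_eq mod_add_right_eq add.assoc)
      moreover have "(v + c) mod n \<in> V" using stab_mem'[of c n V v] c(1) v(1) stabV by simp
      ultimately have "q \<in> tr n s' V" by (simp add: tr_mem)
      moreover have "q \<notin> V"
      proof
        assume "q \<in> V"
        have cn: "c \<le> n" using c(1) KG by auto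
        have "(n - c) mod n \<in> K" using stab_neg[OF TG c(1)[unfolded K_def]] unfolding K_def .
        then have "(q + (n - c) mod n) mod n \<in> V" using stab_mem'[of _ n V q] \<open>q \<in> V\<close> stabV by simp
        moreover have "(q + (n - c) mod n) mod n = u"
          using c(2) neg_back[OF cn, of u] un by simp
        ultimately show False using u(2) by simp
      qed
      ultimately show "q \<in> tr n s' V - V" by simp
    qed
    then have "card K \<le> card (tr n s' V - V)"
      using tr_card_le[OF _ KG] finTV by blast
    moreover have "card W = card V + card (tr n s' V - V)"
      unfolding Weq using card_Un_disjoint[OF finV, of "tr n s' V - V"] finTV
      by (simp add: Un_Diff_cancel)
    ultimately show ?thesis by simp
  qed
  have grow: "1 \<le> j \<longrightarrow> j \<le> k \<longrightarrow> j * card V \<le> card (P j)" for j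
  proof (induction j)
    case 0 then show ?case by simp
  next
    case (Suc j)
    show ?case
    proof (intro impI)
      assume j: "1 \<le> Suc j" "Suc j \<le> k"
      show "Suc j * card V \<le> card (P (Suc j))"
      proof (cases "j = 0")
        case True then show ?thesis using PV by simp
      next
        case False
        then have j1: "1 \<le> j" by simp
        have IH: "j * card V \<le> card (P j)" using Suc.IH j1 j(2) by simp
        have st: "zmod_stab n (SS n (P j) W) = K" using PS[OF j1] stabP[of "Suc j"] j by simp
        have "card (P j) + card W \<le> card (SS n (P j) W) + card K"
          by (rule kneser_per[OF n PG Pne WG Wne st perP perW])
        then have "card (P j) + card V \<le> card (P (Suc j))" using cardW PS[OF j1] by simp
        then show ?thesis using IH by simp
      qed
    qed
  qed
  have disj: "T k \<inter> P l = {}"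
  proof (rule ccontr)
    assume "T k \<inter> P l \<noteq> {}"
    then obtain w where w: "w \<in> T k" "w \<in> P l" by blast
    then obtain t c where tc: "t \<in> T l" "c \<in> K" "w = (t + c) mod n" by (auto simp: P_def ss_iff)
    have cn: "c \<le> n" using tc(2) KG by auto
    have tn: "t < n" using subsetD[OF TG[of l] tc(1)] by simp
    have "(n - c) mod n \<in> K" using stab_neg[OF TG tc(2)[unfolded K_def]] unfolding K_def .
    then have "(w + (n - c) mod n) mod n \<in> T k" using stab_mem'[of _ n "T k" w] w(1) unfolding K_def by simp
    moreover have "(w + (n - c) mod n) mod n = t" using tc(3) neg_back[OF cn, of t] tn by simp
    ultimately have "t \<in> T k \<inter> T l" using tc(1) by simp
    then show False using assms(6) unfolding C_sum_free_def T_def C_def s'_def by blast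
  qed
  have "card (T k) + card (P l) \<le> n"
  proof -
    have fin: "finite (T k)" "finite (P l)"
      using finite_subset[OF TG[of k]] finite_subset[OF PG[of l]] by auto
    have "card (T k) + card (P l) = card (T k \<union> P l)" using card_Un_disjoint[OF fin disj] by simp
    also have "\<dots> \<le> card {0..<n}" using TG[of k] PG[of l] by (intro card_mono) auto
    finally show ?thesis by simp
  qed
  moreover have "k * card V \<le> card (T k)" using grow[of k] k1 Pk by simp
  moreover have "l * card V \<le> card (P l)" using grow[of l] assms(2,3) by simp
  ultimately have "(k + l) * card V \<le> n" by (simp add: algebra_simps)
  moreover have "card A \<le> card V"
    unfolding V_def K_def by (rule card_mono[OF ss_fin[OF n] ss_sup0[OF n AG TG]])
  ultimately have "card A * (k + l) \<le> n"
    by (metis le_trans mult.commute mult_le_mono2)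
  then show ?thesis using assms(3) by (simp add: less_eq_div_iff_mult_less_eq)
qed


end
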